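(* In the setting described in the context (with $L=[0,1]$), let $q\in\{1,\dots,n\}$ and assume there exists $A\subseteq\mathcal C$ with $|A|=n-q$ and $\nu_q(A)=0$. Define $\mu_*:2^{\mathcal C}\to[0,1]$ by $\mu_*(\mathcal C)=1$, $\mu_*(X)=\nu_q(X)$ if $n-q\le|X|<n$, and $\mu_*(X)=\min_{Y\supsetneq X,\ n-q\le|Y|<n}\nu_q(Y)$ if $|X|<n-q$. Then $\mu_*$ is a $q$-minitive capacity and $\max_{1\le k\le N}|S_{\mu_*}(x^{(k)})-\alpha^{(k)}|=\nabla_q$.
   Context: Let $\mathcal C=\{1,\dots,n\}$ and $L=[0,1]$. A capacity is a map $\mu:2^{\mathcal C}\to[0,1]$ with $\mu(\emptyset)=0$, $\mu(\mathcal C)=1$, monotone for inclusion; it is $q$-minitive if for all $X$ with $|X|<n-q$, $\mu(X)=\min_{Y\supsetneq X,\ |Y|\ge n-q}\mu(Y)$. Sugeno integral: $S_\mu(x)=\max_{A\subseteq\mathcal C}\min(\min_{i\in A}x_i,\mu(A))$ with $\min_{i\in\emptyset}x_i=1$. Training data: $N$ pairs $(x^{(k)},\alpha^{(k)})$, $x^{(k)}\in[0,1]^n$, $\alpha^{(k)}\in[0,1]$. For $A\subsetneq\mathcal C$, $\gamma_{k,A}=\max_{i\in\mathcal C\setminus A}x^{(k)}_i$. Write $t^+=\max(t,0)$. For $1\le i\le N$ and $A\subsetneq\mathcal C$ with $|A|\ge n-q$, let $\sigma_\epsilon(\alpha^{(i)},\gamma_{l,A},\alpha^{(l)})=\min\big(\tfrac{(\alpha^{(l)}-\alpha^{(i)})^+}{2},(\alpha^{(l)}-\gamma_{l,A})^+\big)$,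 $\nabla_{i,A}=\max\big((\gamma_{i,A}-\alpha^{(i)})^+,\max_{1\le l\le N}\sigma_\epsilon(\alpha^{(i)},\gamma_{l,A},\alpha^{(l)})\big)$, $\nabla_i=\min_{A\subsetneq\mathcal C,\ |A|\ge n-q}\nabla_{i,A}$, and $\nabla_q=\max_{1\le i\le N}\nabla_i$. For $A\subsetneq\mathcal C$ with $|A|\ge n-q$, $\nu_q(A)=\max_{1\le k\le N}\big(\gamma_{k,A}\,\epsilon\,\max(\alpha^{(k)}-\nabla_q,0)\big)$, where $a\,\epsilon\,b=b$ if $a<b$ and $a\,\epsilon\,b=0$ if $a\ge b$. *)

theory Defs
  imports Complex_Main
begin

text \<open>Criteria set C = {1..n}; data points indexed by k in {1..N};
  x k i is the i-th coordinate of x^(k), alpha k is alpha^(k).\<close>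

definition crit :: "nat \<Rightarrow> nat set" where
  "crit n = {1..n}"

definition pos :: "real \<Rightarrow> real" where
  "pos t = max t 0"

definition gam :: "nat \<Rightarrow> (nat \<Rightarrow> nat \<Rightarrow> real) \<Rightarrow> nat \<Rightarrow> nat set \<Rightarrow> real" where
  "gam n x k A = Max ((x k) ` (crit n - A))"

definition sigma_eps :: "real \<Rightarrow> real \<Rightarrow> real \<Rightarrow> real" where
  "sigma_eps ai g al = min (pos (al - ai) / 2) (pos (al - g))"

definition eps_op :: "real \<Rightarrow> real \<Rightarrow> real" where
  "eps_op a b = (if a < b then b else 0)"

definition upper_sets :: "nat \<Rightarrow> nat \<Rightarrow> nat set set" where
  "upper_sets n q = {A. A \<subset> crit n \<and> n - q \<le> card A}"

definition nabla_iA :: "nat \<Rightarrow> nat \<Rightarrow> (nat \<Rightarrow> nat \<Rightarrow> real) \<Rightarrow> (nat \<Rightarrow> real) \<Rightarrow> nat \<Rightarrow> nat set \<Rightarrow> real" where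
  "nabla_iA n N x alpha i A =
     max (pos (gam n x i A - alpha i))
         (Max ((\<lambda>l. sigma_eps (alpha i) (gam n x l A) (alpha l)) ` {1..N}))"

definition nabla_i :: "nat \<Rightarrow> nat \<Rightarrow> nat \<Rightarrow> (nat \<Rightarrow> nat \<Rightarrow> real) \<Rightarrow> (nat \<Rightarrow> real) \<Rightarrow> nat \<Rightarrow> real" where
  "nabla_i n q N x alpha i = Min ((\<lambda>A. nabla_iA n N x alpha i A) ` upper_sets n q)"

definition nabla_q :: "nat \<Rightarrow> nat \<Rightarrow> nat \<Rightarrow> (nat \<Rightarrow> nat \<Rightarrow> real) \<Rightarrow> (nat \<Rightarrow> real) \<Rightarrow> real" where
  "nabla_q n q N x alpha = Max ((\<lambda>i. nabla_i n q N x alpha i) ` {1..N})"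

definition nu_q :: "nat \<Rightarrow> nat \<Rightarrow> nat \<Rightarrow> (nat \<Rightarrow> nat \<Rightarrow> real) \<Rightarrow> (nat \<Rightarrow> real) \<Rightarrow> nat set \<Rightarrow> real" where
  "nu_q n q N x alpha A =
     Max ((\<lambda>k. eps_op (gam n x k A) (max (alpha k - nabla_q n q N x alpha) 0)) ` {1..N})"

definition mu_star :: "nat \<Rightarrow> nat \<Rightarrow> nat \<Rightarrow> (nat \<Rightarrow> nat \<Rightarrow> real) \<Rightarrow> (nat \<Rightarrow> real) \<Rightarrow> nat set \<Rightarrow> real" where
  "mu_star n q N x alpha X =
     (if X = crit n then 1
      else if n - q \<le> card X \<and> card X < n then nu_q n q N x alpha X
      else Min (nu_q n q N x alpha ` {Y. X \<subset> Y \<and> Y \<subseteq> crit n \<and> n - q \<le> card Y \<and> card Y < n}))"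

definition capacity :: "nat \<Rightarrow> (nat set \<Rightarrow> real) \<Rightarrow> bool" where
  "capacity n mu \<longleftrightarrow>
     (\<forall>X. X \<subseteq> crit n \<longrightarrow> 0 \<le> mu X \<and> mu X \<le> 1) \<and>
     mu {} = 0 \<and> mu (crit n) = 1 \<and>
     (\<forall>X Y. X \<subseteq> Y \<and> Y \<subseteq> crit n \<longrightarrow> mu X \<le> mu Y)"

definition q_minitive :: "nat \<Rightarrow> nat \<Rightarrow> (nat set \<Rightarrow> real) \<Rightarrow> bool" where
  "q_minitive n q mu \<longleftrightarrow>
     (\<forall>X. X \<subseteq> crit n \<and> card X < n - q \<longrightarrow>
        mu X = Min (mu ` {Y. X \<subset> Y \<and> Y \<subseteq> crit n \<and> n - q \<le> card Y}))"

definition sugeno :: "nat \<Rightarrow> (nat set \<Rightarrow> real) \<Rightarrow> (nat \<Rightarrow> real) \<Rightarrow> real" where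
  "sugeno n mu y =
     Max ((\<lambda>A. min (if A = {} then 1 else Min (y ` A)) (mu A)) ` Pow (crit n))"

end

theory Submission
  imports Defs
begin


lemma fin_crit[simp]: "finite (crit n)" by (simp add: crit_def)
lemma card_crit[simp]: "card (crit n) = n" by (simp add: crit_def)

lemma upper_fin: "finite (upper_sets n q)"
  unfolding upper_sets_def by (rule finite_subset[of _ "Pow (crit n)"]) auto

lemma upper_ne: assumes "q \<in> {1..n}" shows "crit n - {n} \<in> upper_sets n q"
proof -
  have nin: "n \<in> crit n" using assms by (simp add: crit_def)
  have c: "card (crit n - {n}) = n - 1" using nin by (simp add: card_Diff_singleton)
  have "crit n - {n} \<subset> crit n" using nin by blast
  moreover have "n - q \<le> card (crit n - {n})" using c assms by (simp add: diff_le_mono2)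
  ultimately show ?thesis unfolding upper_sets_def by blast
qed

lemma upper_props: assumes "B \<in> upper_sets n q"
  shows "B \<subset> crit n" "B \<noteq> crit n" "n - q \<le> card B" "card B < n" "finite B"
proof -
  show "B \<subset> crit n" "B \<noteq> crit n" "n - q \<le> card B" using assms by (auto simp: upper_sets_def)
  then show "card B < n" using psubset_card_mono[of "crit n" B] by simp
  show "finite B" using \<open>B \<subset> crit n\<close> by (rule finite_subset[OF psubset_imp_subset fin_crit])
qed

lemma gam_ub: assumes "A \<subset> crit n" "i \<in> crit n - A" shows "x k i \<le> gam n x k A"
  unfolding gam_def using assms by (intro Max_ge) auto

lemma gam_le: assumes "A \<subset> crit n" "\<And>i. i \<in> crit n - A \<Longrightarrow> x k i \<le> c" shows "gam n x k A \<le> c"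
  unfolding gam_def using assms by (subst Max_le_iff) auto

lemma gam_in: assumes "A \<subset> crit n" obtains i where "i \<in> crit n - A" "gam n x k A = x k i"
proof -
  have "gam n x k A \<in> x k ` (crit n - A)" unfolding gam_def using assms by (intro Max_in) auto
  then show ?thesis using that by auto
qed

lemma gam_mono: assumes "A \<subseteq> B" "B \<subset> crit n" shows "gam n x k B \<le> gam n x k A"
proof -
  obtain i where "i \<in> crit n - B" "gam n x k B = x k i" using gam_in[OF assms(2)] by blast
  moreover have "A \<subset> crit n" using assms by auto
  ultimately show ?thesis using gam_ub[of A n i x k] assms by auto
qed

lemma nabla_iA_nonneg: "0 \<le> nabla_iA n N x alpha i A"
  unfolding nabla_iA_def pos_def by simp

lemma nabla_iA_le: assumes "1 \<le> N" "nabla_iA n N x alpha i A \<le> E"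
  shows "gam n x i A - alpha i \<le> E" "\<And>l. l \<in> {1..N} \<Longrightarrow> sigma_eps (alpha i) (gam n x l A) (alpha l) \<le> E"
  using assms by (auto simp: nabla_iA_def pos_def Max_le_iff)

lemma nabla_iA_leI: assumes "1 \<le> N" "0 \<le> E" "gam n x i A - alpha i \<le> E"
   "\<And>l. l \<in> {1..N} \<Longrightarrow> sigma_eps (alpha i) (gam n x l A) (alpha l) \<le> E"
  shows "nabla_iA n N x alpha i A \<le> E"
  using assms by (auto simp: nabla_iA_def pos_def Max_le_iff)

lemma sigma_le: "0 \<le> E \<Longrightarrow> sigma_eps ai g al \<le> E \<longleftrightarrow> (al - ai \<le> 2*E \<or> al - g \<le> E)"
  by (auto simp: sigma_eps_def pos_def min_def max_def)

lemma nabla_i_le: "A \<in> upper_sets n q \<Longrightarrow> nabla_i n q N x alpha i \<le> nabla_iA n N x alpha i A"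
  unfolding nabla_i_def using upper_fin by (intro Min_le) auto

lemma nabla_i_attained: assumes "q \<in> {1..n}"
  obtains A where "A \<in> upper_sets n q" "nabla_i n q N x alpha i = nabla_iA n N x alpha i A"
proof -
  have "nabla_i n q N x alpha i \<in> (\<lambda>A. nabla_iA n N x alpha i A) ` upper_sets n q"
    unfolding nabla_i_def using upper_fin upper_ne[OF assms] by (intro Min_in) auto
  then show ?thesis using that by auto
qed

lemma nabla_i_nonneg: assumes "q \<in> {1..n}" shows "0 \<le> nabla_i n q N x alpha i"
  using nabla_i_attained[OF assms] nabla_iA_nonneg by metis

lemma nabla_q_ge: "i \<in> {1..N} \<Longrightarrow> nabla_i n q N x alpha i \<le> nabla_q n q N x alpha"
  unfolding nabla_q_def by (intro Max_ge) auto

lemma nabla_q_attained: assumes "1 \<le> N"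
  obtains i where "i \<in> {1..N}" "nabla_q n q N x alpha = nabla_i n q N x alpha i"
proof -
  have "nabla_q n q N x alpha \<in> (\<lambda>i. nabla_i n q N x alpha i) ` {1..N}"
    unfolding nabla_q_def using assms by (intro Max_in) auto
  then show ?thesis using that by auto
qed

lemma nabla_q_nonneg: assumes "1 \<le> N" "q \<in> {1..n}" shows "0 \<le> nabla_q n q N x alpha"
  using nabla_q_attained[OF assms(1)] nabla_i_nonneg[OF assms(2)] by metis

lemma nu_ge: assumes "k \<in> {1..N}" "gam n x k A < max (alpha k - nabla_q n q N x alpha) 0"
  shows "max (alpha k - nabla_q n q N x alpha) 0 \<le> nu_q n q N x alpha A"
proof -
  have "eps_op (gam n x k A) (max (alpha k - nabla_q n q N x alpha) 0) \<le> nu_q n q N x alpha A"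
    unfolding nu_q_def using assms by (intro Max_ge) auto
  then show ?thesis using assms by (simp add: eps_op_def)
qed

lemma nu_le: assumes "1 \<le> N" "0 \<le> c"
  "\<And>k. k \<in> {1..N} \<Longrightarrow> gam n x k A < max (alpha k - nabla_q n q N x alpha) 0
      \<Longrightarrow> max (alpha k - nabla_q n q N x alpha) 0 \<le> c"
  shows "nu_q n q N x alpha A \<le> c"
proof -
  have "\<forall>k\<in>{1..N}. eps_op (gam n x k A) (max (alpha k - nabla_q n q N x alpha) 0) \<le> c"
    using assms by (auto simp: eps_op_def)
  then show ?thesis unfolding nu_q_def using assms(1) by (subst Max_le_iff) auto
qed

lemma nu_nonneg: assumes "1 \<le> N" shows "0 \<le> nu_q n q N x alpha A"
proof -
  have "eps_op (gam n x 1 A) (max (alpha 1 - nabla_q n q N x alpha) 0) \<le> nu_q n q N x alpha A"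
    unfolding nu_q_def using assms by (intro Max_ge) auto
  then show ?thesis by (smt (verit) eps_op_def)
qed

lemma nu_mono: assumes "1 \<le> N" "A \<subseteq> B" "B \<subset> crit n"
  shows "nu_q n q N x alpha A \<le> nu_q n q N x alpha B"
proof (rule nu_le[OF assms(1) nu_nonneg[OF assms(1)]])
  fix k assume k: "k \<in> {1..N}" and lt: "gam n x k A < max (alpha k - nabla_q n q N x alpha) 0"
  have "gam n x k B \<le> gam n x k A" by (rule gam_mono[OF assms(2,3)])
  then have "gam n x k B < max (alpha k - nabla_q n q N x alpha) 0" using lt by linarith
  then show "max (alpha k - nabla_q n q N x alpha) 0 \<le> nu_q n q N x alpha B" by (rule nu_ge[OF k])
qed

lemma nu_le1: assumes "1 \<le> N" "q \<in> {1..n}" "\<And>k. k \<in> {1..N} \<Longrightarrow> alpha k \<le> 1"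
  shows "nu_q n q N x alpha A \<le> 1"
proof (rule nu_le[OF assms(1)])
  fix k assume "k \<in> {1..N}"
  then show "max (alpha k - nabla_q n q N x alpha) 0 \<le> 1"
    using nabla_q_nonneg[OF assms(1,2), of x alpha] assms(3)[of k] by simp
qed simp



lemma sug_L:
  assumes mono: "\<And>X Y. X \<subseteq> Y \<Longrightarrow> Y \<subseteq> crit n \<Longrightarrow> mu X \<le> mu Y" and B: "B \<subset> crit n"
  shows "sugeno n mu y \<le> max (Max (y ` (crit n - B))) (mu B)"
  unfolding sugeno_def
proof (rule Max.boundedI)
  show "finite ((\<lambda>A. min (if A = {} then 1 else Min (y ` A)) (mu A)) ` Pow (crit n))" by simp
  show "(\<lambda>A. min (if A = {} then 1 else Min (y ` A)) (mu A)) ` Pow (crit n) \<noteq> {}" by blast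
next
  fix t assume "t \<in> (\<lambda>A. min (if A = {} then 1 else Min (y ` A)) (mu A)) ` Pow (crit n)"
  then obtain A where A: "A \<subseteq> crit n" and t: "t = min (if A = {} then 1 else Min (y ` A)) (mu A)" by auto
  show "t \<le> max (Max (y ` (crit n - B))) (mu B)"
  proof (cases "A \<subseteq> B")
    case True
    then have "mu A \<le> mu B" using mono B by auto
    then show ?thesis using t by linarith
  next
    case False
    then obtain i where i: "i \<in> A" "i \<notin> B" by auto
    have fA: "finite A" using A finite_subset fin_crit by blast
    have "Min (y ` A) \<le> y i" using i fA by (intro Min_le) auto
    also have "y i \<le> Max (y ` (crit n - B))" using i A by (intro Max_ge) auto
    finally show ?thesis using t i by auto
  qed
qed

lemma sug_G:
  assumes C1: "mu (crit n) = 1" and U1: "\<And>B. B \<in> U \<Longrightarrow> mu B \<le> 1" and Une: "U \<noteq> {}"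
    and Up: "\<And>B. B \<in> U \<Longrightarrow> B \<subset> crit n" and y1: "\<And>i. i \<in> crit n \<Longrightarrow> y i \<le> 1"
    and ext: "\<And>A. A \<subset> crit n \<Longrightarrow> \<exists>B\<in>U. A \<subseteq> B \<and> mu B \<le> mu A"
  shows "\<exists>B\<in>U. max (Max (y ` (crit n - B))) (mu B) \<le> sugeno n mu y"
proof (cases "1 \<le> sugeno n mu y")
  case True
  obtain B where B: "B \<in> U" using Une by auto
  have "Max (y ` (crit n - B)) \<le> 1" using Up[OF B] y1 by (subst Max_le_iff) auto
  then show ?thesis using B U1[OF B] True by (intro bexI[of _ B]) auto
next
  case False
  define t where "t = sugeno n mu y"
  define A where "A = {i \<in> crit n. t < y i}"
  have "min (if A = {} then 1 else Min (y ` A)) (mu A) \<le> t"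
  proof -
    have "A \<in> Pow (crit n)" by (auto simp: A_def)
    then show ?thesis unfolding t_def sugeno_def by (intro Max_ge) auto
  qed
  moreover have "t < (if A = {} then 1 else Min (y ` A))"
    using False by (auto simp: t_def A_def)
  ultimately have muA: "mu A \<le> t" by linarith
  have "A \<noteq> crit n" using muA C1 False t_def by auto
  then have Ap: "A \<subset> crit n" by (auto simp: A_def)
  obtain B where B: "B \<in> U" "A \<subseteq> B" "mu B \<le> mu A" using ext[OF Ap] by auto
  have "Max (y ` (crit n - B)) \<le> t" using Up[OF B(1)] B(2) by (subst Max_le_iff) (auto simp: A_def)
  then show ?thesis using B muA t_def by auto
qed



context
  fixes n q N :: nat and x :: "nat \<Rightarrow> nat \<Rightarrow> real" and alpha :: "nat \<Rightarrow> real"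
  assumes N1: "1 \<le> N"
    and xb: "\<And>k i. k \<in> {1..N} \<Longrightarrow> i \<in> crit n \<Longrightarrow> 0 \<le> x k i \<and> x k i \<le> 1"
    and ab: "\<And>k. k \<in> {1..N} \<Longrightarrow> 0 \<le> alpha k \<and> alpha k \<le> 1"
    and qn: "q \<in> {1..n}"
    and H: "\<exists>A. A \<subseteq> crit n \<and> card A = n - q \<and> nu_q n q N x alpha A = 0"
begin

abbreviation "M \<equiv> mu_star n q N x alpha"
abbreviation "nu \<equiv> nu_q n q N x alpha"
abbreviation "Ups X \<equiv> {Y. X \<subset> Y \<and> Y \<subseteq> crit n \<and> n - q \<le> card Y \<and> card Y < n}"

lemma M_upper: "B \<in> upper_sets n q \<Longrightarrow> M B = nu B"
  using upper_props[of B n q] unfolding mu_star_def by auto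

lemma Ups_fin: "finite (Ups X)"
  by (rule finite_subset[of _ "Pow (crit n)"]) auto

lemma Ups_upper: "Y \<in> Ups X \<Longrightarrow> Y \<in> upper_sets n q"
  unfolding upper_sets_def by auto

lemma Ups_ne: assumes "X \<subseteq> crit n" "card X < n - q" shows "Ups X \<noteq> {}"
proof -
  obtain Y where Y: "X \<subseteq> Y" "Y \<subseteq> crit n" "card Y = n - q"
    using exists_subset_between[of X "n - q" "crit n"] assms by auto
  have "X \<noteq> Y" using Y assms by auto
  moreover have "card Y < n" using Y qn by auto
  ultimately have "Y \<in> Ups X" using Y by auto
  then show ?thesis by auto
qed

lemma M_small: assumes "X \<subseteq> crit n" "card X < n - q" shows "M X = Min (nu ` Ups X)"
proof -
  have "X \<noteq> crit n" using assms by auto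
  then show ?thesis using assms unfolding mu_star_def by auto
qed

lemma M_small_att: assumes "X \<subseteq> crit n" "card X < n - q"
  obtains Y where "Y \<in> Ups X" "M X = nu Y"
proof -
  have "Min (nu ` Ups X) \<in> nu ` Ups X" using Ups_fin Ups_ne[OF assms] by (intro Min_in) auto
  then show ?thesis using that M_small[OF assms] by auto
qed

lemma M_small_le: assumes "X \<subseteq> crit n" "card X < n - q" "Y \<in> Ups X" shows "M X \<le> nu Y"
  using M_small[OF assms(1,2)] Ups_fin assms(3) by (simp add: Min_le)

lemma M_cases: assumes "X \<subseteq> crit n"
  shows "X = crit n \<or> X \<in> upper_sets n q \<or> card X < n - q"
  using assms unfolding upper_sets_def by auto

lemma nu01: "0 \<le> nu A \<and> nu A \<le> 1"
  using nu_nonneg[OF N1] nu_le1[OF N1 qn] ab by blast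

lemma M_range: assumes "X \<subseteq> crit n" shows "0 \<le> M X \<and> M X \<le> 1"
proof -
  consider "X = crit n" | "X \<in> upper_sets n q" | "card X < n - q" using M_cases[OF assms] by blast
  then show ?thesis
  proof cases
    case 1 then show ?thesis by (simp add: mu_star_def)
  next
    case 2 then show ?thesis using M_upper nu01 by simp
  next
    case 3 then show ?thesis using M_small_att[OF assms] nu01 by metis
  qed
qed

lemma M_mono: assumes "X \<subseteq> Y" "Y \<subseteq> crit n" shows "M X \<le> M Y"
proof -
  have X: "X \<subseteq> crit n" using assms by auto
  have fY: "finite Y" using assms(2) finite_subset fin_crit by blast
  consider "Y = crit n" | "Y \<in> upper_sets n q" | "card Y < n - q" using M_cases[OF assms(2)] by blast
  then show ?thesis
  proof cases
    case 1
    then show ?thesis using M_range[OF X] by (simp add: mu_star_def)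
  next
    case 2
    note Yp = upper_props[OF 2]
    consider "X = crit n" | "X \<in> upper_sets n q" | "card X < n - q" using M_cases[OF X] by blast
    then show ?thesis
    proof cases
      case 1 then show ?thesis using Yp assms by auto
    next
      case XX: 2
      then show ?thesis using M_upper[OF XX] M_upper[OF 2] nu_mono[OF N1 assms(1) Yp(1)] by simp
    next
      case 3
      then have "Y \<in> Ups X" using Yp assms by auto
      then show ?thesis using M_small_le[OF X 3] M_upper[OF 2] by simp
    qed
  next
    case 3
    have cX: "card X < n - q" using card_mono[OF fY assms(1)] 3 by simp
    have "Min (nu ` Ups X) \<le> Min (nu ` Ups Y)"
    proof -
      have sub: "Ups Y \<subseteq> Ups X" using assms(1) by auto
      show ?thesis
        by (rule Min_antimono[OF image_mono[OF sub]]) (use Ups_fin Ups_ne[OF assms(2) 3] in auto)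
    qed
    then show ?thesis using M_small[OF X cX] M_small[OF assms(2) 3] by simp
  qed
qed

lemma M_empty: "M {} = 0"
proof -
  obtain A where A: "A \<subseteq> crit n" "card A = n - q" "nu A = 0" using H by blast
  have fA: "finite A" using A finite_subset fin_crit by blast
  show ?thesis
  proof (cases "q = n")
    case True
    then have "A = {}" using A fA by auto
    then show ?thesis using A True qn unfolding mu_star_def by (auto simp: crit_def)
  next
    case False
    then have c: "card ({}::nat set) < n - q" using qn by auto
    have "A \<in> Ups {}" using A c qn by auto
    then have "M {} \<le> nu A" by (rule M_small_le[OF empty_subsetI c])
    then have "M {} \<le> 0" using A(3) by simp
    then show ?thesis using M_range[of "{}"] by simp
  qed
qed

lemma M_crit: "M (crit n) = 1" by (simp add: mu_star_def)

lemma M_capacity: "capacity n M"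
  unfolding capacity_def
proof (intro conjI allI impI)
  fix X assume "X \<subseteq> crit n"
  then show "0 \<le> M X" "M X \<le> 1" using M_range by blast+
next
  show "M {} = 0" by (rule M_empty)
  show "M (crit n) = 1" by (rule M_crit)
next
  fix X Y assume "X \<subseteq> Y \<and> Y \<subseteq> crit n"
  then show "M X \<le> M Y" using M_mono by blast
qed

lemma M_qmin: "q_minitive n q M"
  unfolding q_minitive_def
proof (intro allI impI)
  fix X assume XX: "X \<subseteq> crit n \<and> card X < n - q"
  then have X: "X \<subseteq> crit n" and cX: "card X < n - q" by auto
  define S where "S = {Y. X \<subset> Y \<and> Y \<subseteq> crit n \<and> n - q \<le> card Y}"
  obtain Y where Y: "Y \<in> Ups X" "M X = nu Y" using M_small_att[OF X cX] by blast
  have "M X = M Y" using Y M_upper[OF Ups_upper[OF Y(1)]] by simp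
  moreover have "Y \<in> S" using Y(1) by (simp add: S_def)
  ultimately have mem: "M X \<in> M ` S" by blast
  have "S \<subseteq> Pow (crit n)" by (auto simp: S_def)
  then have fS: "finite S" by (rule finite_subset) simp
  have lb: "M X \<le> z" if "z \<in> M ` S" for z
  proof -
    obtain Z where Z: "Z \<in> S" "z = M Z" using \<open>z \<in> M ` S\<close> by blast
    have "X \<subseteq> Z" "Z \<subseteq> crit n" using Z(1) by (auto simp: S_def)
    then show ?thesis using M_mono Z(2) by simp
  qed
  show "M X = Min (M ` S)"
    by (rule sym, rule Min_eqI[OF finite_imageI[OF fS] lb mem])
qed

lemma S_L: assumes "B \<in> upper_sets n q"
  shows "sugeno n M (x k) \<le> max (gam n x k B) (nu B)"
proof -
  have "sugeno n M (x k) \<le> max (Max (x k ` (crit n - B))) (M B)"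
    by (rule sug_L[OF M_mono upper_props(1)[OF assms]])
  then show ?thesis using M_upper[OF assms] unfolding gam_def by simp
qed

lemma S_G: assumes "k \<in> {1..N}"
  shows "\<exists>B\<in>upper_sets n q. max (gam n x k B) (nu B) \<le> sugeno n M (x k)"
proof -
  have "\<exists>B\<in>upper_sets n q. max (Max (x k ` (crit n - B))) (M B) \<le> sugeno n M (x k)"
  proof (rule sug_G)
    show "M (crit n) = 1" by (simp add: mu_star_def)
    show "M B \<le> 1" if "B \<in> upper_sets n q" for B
      using M_range[OF psubset_imp_subset[OF upper_props(1)[OF that]]] by simp
    show "upper_sets n q \<noteq> {}" using upper_ne[OF qn] by blast
    show "B \<subset> crit n" if "B \<in> upper_sets n q" for B using upper_props(1)[OF that] .
    show "x k i \<le> 1" if "i \<in> crit n" for i using xb[OF assms that] by simp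
    show "\<exists>B\<in>upper_sets n q. A \<subseteq> B \<and> M B \<le> M A" if A: "A \<subset> crit n" for A
    proof -
      have A': "A \<subseteq> crit n" using A by simp
      consider "A \<in> upper_sets n q" | "card A < n - q" using M_cases[OF A'] A by blast
      then show ?thesis
      proof cases
        case 1 then show ?thesis by (intro bexI[of _ A]) auto
      next
        case 2
        obtain Y where Y: "Y \<in> Ups A" "M A = nu Y" using M_small_att[OF A' 2] by blast
        have YU: "Y \<in> upper_sets n q" using Ups_upper[OF Y(1)] .
        have "A \<subseteq> Y" using Y(1) by blast
        moreover have "M Y \<le> M A" using Y(2) M_upper[OF YU] by simp
        ultimately show ?thesis using YU by blast
      qed
    qed
  qed
  then obtain B where B: "B \<in> upper_sets n q" "max (Max (x k ` (crit n - B))) (M B) \<le> sugeno n M (x k)"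
    by blast
  then show ?thesis using M_upper[OF B(1)] unfolding gam_def by (intro bexI[of _ B]) auto
qed

lemma main_err:
  "Max ((\<lambda>k. \<bar>sugeno n M (x k) - alpha k\<bar>) ` {1..N}) = nabla_q n q N x alpha"
proof -
  define D where "D = nabla_q n q N x alpha"
  define S where "S k = sugeno n M (x k)" for k
  define E where "E = Max ((\<lambda>k. \<bar>S k - alpha k\<bar>) ` {1..N})"
  have D0: "0 \<le> D" using nabla_q_nonneg[OF N1 qn] by (simp add: D_def)
  have fin: "finite ((\<lambda>k. \<bar>S k - alpha k\<bar>) ` {1..N})" by simp
  have ne: "(\<lambda>k. \<bar>S k - alpha k\<bar>) ` {1..N} \<noteq> {}" using N1 by auto
  have Ege: "\<bar>S k - alpha k\<bar> \<le> E" if "k \<in> {1..N}" for k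
    unfolding E_def by (rule Max_ge[OF fin]) (use that in blast)
  have E0: "0 \<le> E" using Ege[of 1] N1 by force
  have lo: "alpha k - D \<le> S k" if k: "k \<in> {1..N}" for k
  proof -
    obtain B where B: "B \<in> upper_sets n q" "max (gam n x k B) (nu B) \<le> S k"
      using S_G[OF k] S_def by auto
    have g: "gam n x k B \<le> S k" and nb: "nu B \<le> S k" using B(2) by simp_all
    obtain i where i: "i \<in> crit n - B" "gam n x k B = x k i"
      using gam_in[OF upper_props(1)[OF B(1)]] by blast
    have g0: "0 \<le> gam n x k B" using i xb[OF k, of i] by simp
    show ?thesis
    proof (cases "gam n x k B < max (alpha k - D) 0")
      case True
      then have "max (alpha k - D) 0 \<le> nu B" using nu_ge[OF k] D_def by simp
      then show ?thesis using nb by simp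
    next
      case False
      then show ?thesis using g g0 by (simp add: max_def split: if_splits)
    qed
  qed
  have hi: "S k \<le> alpha k + D" if k: "k \<in> {1..N}" for k
  proof -
    obtain A where A: "A \<in> upper_sets n q" "nabla_i n q N x alpha k = nabla_iA n N x alpha k A"
      using nabla_i_attained[OF qn] by metis
    have "nabla_iA n N x alpha k A \<le> D" using A(2) nabla_q_ge[OF k, of n q x alpha] D_def by simp
    note c = nabla_iA_le[OF N1 this]
    have nuA: "nu A \<le> alpha k + D"
    proof (rule nu_le[OF N1])
      show "0 \<le> alpha k + D" using ab[OF k] D0 by simp
      fix l assume l: "l \<in> {1..N}" and lt: "gam n x l A < max (alpha l - nabla_q n q N x alpha) 0"
      have "sigma_eps (alpha k) (gam n x l A) (alpha l) \<le> D" using c(2)[OF l] .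
      then have "alpha l - alpha k \<le> 2*D \<or> alpha l - gam n x l A \<le> D" using sigma_le[OF D0] by blast
      then show "max (alpha l - nabla_q n q N x alpha) 0 \<le> alpha k + D"
        using lt ab[OF k] D0 unfolding D_def[symmetric] by (auto simp: max_def split: if_splits)
    qed
    have "S k \<le> max (gam n x k A) (nu A)" using S_L[OF A(1)] S_def by simp
    moreover have "max (gam n x k A) (nu A) \<le> alpha k + D" using c(1) nuA by simp
    ultimately show ?thesis by linarith
  qed
  have le: "E \<le> D" unfolding E_def
  proof (rule Max.boundedI[OF fin ne])
    fix t assume "t \<in> (\<lambda>k. \<bar>S k - alpha k\<bar>) ` {1..N}"
    then obtain k where k: "k \<in> {1..N}" "t = \<bar>S k - alpha k\<bar>" by blast
    show "t \<le> D" using lo[OF k(1)] hi[OF k(1)] k(2) by (simp add: abs_le_iff)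
  qed
  have ge: "D \<le> E"
  proof -
    obtain i where i: "i \<in> {1..N}" "D = nabla_i n q N x alpha i"
      using nabla_q_attained[OF N1] D_def by metis
    obtain B where B: "B \<in> upper_sets n q" "max (gam n x i B) (nu B) \<le> S i"
      using S_G[OF i(1)] S_def by auto
    have Si: "S i \<le> alpha i + E" using Ege[OF i(1)] by (simp add: abs_le_iff)
    have "nabla_iA n N x alpha i B \<le> E"
    proof (rule nabla_iA_leI[OF N1 E0])
      show "gam n x i B - alpha i \<le> E" using B(2) Si by simp
      fix l assume l: "l \<in> {1..N}"
      have Sl: "S l \<le> max (gam n x l B) (nu B)" using S_L[OF B(1)] S_def by simp
      have Sl2: "alpha l - E \<le> S l" using Ege[OF l] by (simp add: abs_le_iff)
      have "alpha l - alpha i \<le> 2*E \<or> alpha l - gam n x l B \<le> E"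
      proof (cases "alpha l - gam n x l B \<le> E")
        case True then show ?thesis by simp
      next
        case False
        then have "alpha l - E \<le> nu B" using Sl Sl2 by (auto simp: max_def split: if_splits)
        moreover have "nu B \<le> alpha i + E" using B(2) Si by simp
        ultimately show ?thesis by simp
      qed
      then show "sigma_eps (alpha i) (gam n x l B) (alpha l) \<le> E" using sigma_le[OF E0] by blast
    qed
    then show ?thesis using i(2) nabla_i_le[OF B(1), of N x alpha i] by linarith
  qed
  show ?thesis using le ge unfolding E_def S_def D_def by simp
qed

end

theorem proposition4:
  fixes n q N :: nat and x :: "nat \<Rightarrow> nat \<Rightarrow> real" and alpha :: "nat \<Rightarrow> real"
  assumes "1 \<le> N"
    and "\<And>k i. k \<in> {1..N} \<Longrightarrow> i \<in> crit n \<Longrightarrow> 0 \<le> x k i \<and> x k i \<le> 1"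
    and "\<And>k. k \<in> {1..N} \<Longrightarrow> 0 \<le> alpha k \<and> alpha k \<le> 1"
    and "q \<in> {1..n}"
    and "\<exists>A. A \<subseteq> crit n \<and> card A = n - q \<and> nu_q n q N x alpha A = 0"
  shows "capacity n (mu_star n q N x alpha) \<and> q_minitive n q (mu_star n q N x alpha) \<and>
         Max ((\<lambda>k. \<bar>sugeno n (mu_star n q N x alpha) (x k) - alpha k\<bar>) ` {1..N})
           = nabla_q n q N x alpha"
  using M_capacity[OF assms] M_qmin[OF assms] main_err[OF assms] by blast

end
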